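(* In the setting described in the context, fix $1\le n_1\le n_0$. Then for $1\le j\le n_0$, $I\in\mathcal I(n_1,n)$, $J\in\mathcal I(n_1,n_0)$ and $x\in B_{(X,d)}(x_0,\xi)$, $$\left|X_j\det X(x)_{I,J}\right|\lesssim\left|\det_{n_1\times n_1}X(x)\right|.$$
   Context: Setting: $\Omega\subseteq\mathbb R^n$ connected open; $X_1,\dots,X_{n_0}$ $C^1$ vector fields on $\Omega$ with degrees $d_j\in(0,\infty)$; $\xi\in(0,1]$, $x_0\in\Omega$, $(X,d)$ satisfies $\mathcal C(x_0,\xi)$; on $B=B_{(X,d)}(x_0,\xi)$, $[X_j,X_k]=\sum_{l=1}^{n_0}c^l_{j,k}X_l$; $X_1(x_0),\dots,X_{n_0}(x_0)$ linearly independent; $\|X_j\|_{C^1(B)}<\infty$; $\sum_{|\alpha|\le2}\|X^\alpha c^l_{j,k}\|_{C^0(B)}<\infty$ (derivatives continuous). $B_{(X,d)}(x_0,\xi)$ is the set of $\gamma(1)$ over paths $\gamma:[0,1]\to\Omega$, $\gamma(t)=x_0+\int_0^t\sum a_j\xi^{d_j}X_j(\gamma)$, $a\in L^\infty$, $\|(\sum|a_j|^2)^{1/2}\|_\infty<1$; $\mathcal C(x_0,\xi)$ means all such paths exist in $\Omega$. $X(x)$ is the $n\times n_0$ matrix with columns $X_j(x)$; $\mathcal I(m,N)$ is the set of increasing $m$-tuples from $\{1,\dots,N\}$; $M_{I,J}$ the submatrix with rows $I$ and columns $J$; $\det_{m\times m}M$ the vector of all $\det M_{I,J}$ and $|\cdot|$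 its Euclidean norm. Admissible constants depend only on upper/positive lower bounds for the $d_j$, an upper bound for $n$, a positive lower bound for $\xi$, and upper bounds for $\|X_j\|_{C^1(B)}$ and $\sum_{|\alpha|\le2}\|X^\alpha c^l_{j,k}\|_{C^0(B)}$; $\lesssim$ is up to admissible constants. *)

theory Defs
  imports "HOL-Analysis.Analysis"
begin

text \<open>Points of R^n are elements of real^'n; the coordinate index type 'n carries a
linear order so that "increasing tuples" of row indices make sense.
Vector fields are indexed 0..n0-1 (the paper's X_1..X_{n0}).\<close>

definition admissible_control :: "nat \<Rightarrow> (nat \<Rightarrow> real \<Rightarrow> real) \<Rightarrow> bool" where
  "admissible_control n0 a \<longleftrightarrow>
     (\<forall>j<n0. a j \<in> borel_measurable (lebesgue_on {0..1})) \<and>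
     (\<exists>r<1. AE s in lebesgue_on {0..1}. sqrt (\<Sum>j<n0. (a j s)\<^sup>2) \<le> r)"

definition control_path ::
  "(real^'n::finite) set \<Rightarrow> (nat \<Rightarrow> real^'n \<Rightarrow> real^'n) \<Rightarrow> (nat \<Rightarrow> real) \<Rightarrow> nat
     \<Rightarrow> real^'n \<Rightarrow> real \<Rightarrow> (nat \<Rightarrow> real \<Rightarrow> real) \<Rightarrow> (real \<Rightarrow> real^'n) \<Rightarrow> bool" where
  "control_path \<Omega> X d n0 x0 \<xi> a \<gamma> \<longleftrightarrow>
     (\<forall>t\<in>{0..1}. \<gamma> t \<in> \<Omega> \<and>
        ((\<lambda>s. \<Sum>j<n0. (a j s * \<xi> powr d j) *\<^sub>R X j (\<gamma> s)) has_integral (\<gamma> t - x0)) {0..t})"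

definition cc_ball ::
  "(real^'n::finite) set \<Rightarrow> (nat \<Rightarrow> real^'n \<Rightarrow> real^'n) \<Rightarrow> (nat \<Rightarrow> real) \<Rightarrow> nat
     \<Rightarrow> real^'n \<Rightarrow> real \<Rightarrow> (real^'n) set" where
  "cc_ball \<Omega> X d n0 x0 \<xi> =
     {\<gamma> 1 | \<gamma> a. admissible_control n0 a \<and> control_path \<Omega> X d n0 x0 \<xi> a \<gamma>}"

definition cond_C ::
  "(real^'n::finite) set \<Rightarrow> (nat \<Rightarrow> real^'n \<Rightarrow> real^'n) \<Rightarrow> (nat \<Rightarrow> real) \<Rightarrow> nat
     \<Rightarrow> real^'n \<Rightarrow> real \<Rightarrow> bool" where
  "cond_C \<Omega> X d n0 x0 \<xi> \<longleftrightarrow>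
     (\<forall>a. admissible_control n0 a \<longrightarrow> (\<exists>\<gamma>. control_path \<Omega> X d n0 x0 \<xi> a \<gamma>))"

text \<open>g = V f on S, where V f is the derivative of f along integral curves of V
(staying in S); this makes sense for functions only defined on S.\<close>
definition has_lie_deriv_on ::
  "(real^'n \<Rightarrow> real^'n) \<Rightarrow> (real^'n \<Rightarrow> real) \<Rightarrow> (real^'n \<Rightarrow> real) \<Rightarrow> (real^'n) set \<Rightarrow> bool" where
  "has_lie_deriv_on V f g S \<longleftrightarrow>
     (\<forall>x\<in>S. \<forall>\<gamma> e. 0 < e \<and> \<gamma> 0 = x \<and>
        (\<forall>t\<in>{-e<..<e}. \<gamma> t \<in> S \<and> (\<gamma> has_vector_derivative V (\<gamma> t)) (at t))
        \<longrightarrow> ((f \<circ> \<gamma>) has_real_derivative g x) (at 0))"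

definition ldet :: "nat \<Rightarrow> (nat \<Rightarrow> nat \<Rightarrow> real) \<Rightarrow> real" where
  "ldet m A = (\<Sum>p | p permutes {..<m}. of_int (sign p) * (\<Prod>i<m. A i (p i)))"

definition Xmat :: "(nat \<Rightarrow> real^'n \<Rightarrow> real^'n) \<Rightarrow> real^'n \<Rightarrow> ('n \<Rightarrow> nat \<Rightarrow> real)" where
  "Xmat X x = (\<lambda>r j. X j x $ r)"

definition minor :: "('n::linorder \<Rightarrow> nat \<Rightarrow> real) \<Rightarrow> 'n set \<Rightarrow> nat set \<Rightarrow> real" where
  "minor M I J = ldet (card I)
     (\<lambda>a b. M (sorted_list_of_set I ! a) (sorted_list_of_set J ! b))"

text \<open>|det_{m x m} M| for an n x N matrix M: Euclidean norm of the vector of all m x m minors.\<close>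
definition minors_norm :: "nat \<Rightarrow> nat \<Rightarrow> ('n::{finite,linorder} \<Rightarrow> nat \<Rightarrow> real) \<Rightarrow> real" where
  "minors_norm m N M = sqrt (\<Sum>I\<in>{I::'n set. card I = m}.
      \<Sum>J\<in>{J. J \<subseteq> {..<N} \<and> card J = m}. (minor M I J)\<^sup>2)"

end

theory Submission imports Defs begin

definition tr :: "(nat \<Rightarrow> nat \<Rightarrow> real) \<Rightarrow> (nat \<Rightarrow> nat \<Rightarrow> real)" where
  "tr A = (\<lambda>a b. A b a)"

lemma tr_apply[simp]: "tr A a b = A b a" by (simp add: tr_def)

lemma ldet_transpose: "ldet m (tr A) = ldet m A"
proof -
  have "ldet m (tr A) = (\<Sum>p | p permutes {..<m}. of_int (sign (inv p)) * (\<Prod>i<m. A (inv p i) i))"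
    unfolding ldet_def tr_def by (rule sum_permutations_inverse)
  also have "\<dots> = ldet m A"
    unfolding ldet_def
  proof (rule sum.cong[OF refl])
    fix p assume "p \<in> {p. p permutes {..<m}}"
    then have p: "p permutes {..<m}" by simp
    have pp: "permutation p" using p permutation_permutes by blast
    have "(\<Prod>i<m. A (inv p i) i) = prod ((\<lambda>i. A (inv p i) i) \<circ> p) {..<m}"
      by (rule prod.permute[OF p])
    also have "\<dots> = (\<Prod>i<m. A i (p i))"
      by (simp add: o_def permutes_inverses(2)[OF p])
    finally show "of_int (sign (inv p)) * (\<Prod>i<m. A (inv p i) i) = of_int (sign p) * (\<Prod>i<m. A i (p i))"
      by (simp add: sign_inverse[OF pp])
  qed
  finally show ?thesis .
qed

lemma ldet_permute_rows:
  assumes s: "s permutes {..<m}"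
  shows "ldet m (\<lambda>a b. A (s a) b) = of_int (sign s) * ldet m A"
proof -
  have sp: "permutation s" using s permutation_permutes by blast
  have "ldet m (\<lambda>a b. A (s a) b) = (\<Sum>q | q permutes {..<m}. of_int (sign (q \<circ> s)) * (\<Prod>i<m. A (s i) ((q \<circ> s) i)))"
    unfolding ldet_def by (rule sum_permutations_compose_right[OF s])
  also have "\<dots> = (\<Sum>q | q permutes {..<m}. of_int (sign s) * (of_int (sign q) * (\<Prod>i<m. A i (q i))))"
  proof (rule sum.cong[OF refl])
    fix q assume "q \<in> {q. q permutes {..<m}}"
    then have q: "q permutes {..<m}" by simp
    have qp: "permutation q" using q permutation_permutes by blast
    have "(\<Prod>i<m. A (s i) ((q \<circ> s) i)) = prod ((\<lambda>i. A i (q i)) \<circ> s) {..<m}"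
      by (simp add: o_def)
    also have "\<dots> = (\<Prod>i<m. A i (q i))" by (rule prod.permute[OF s, symmetric])
    finally show "of_int (sign (q \<circ> s)) * (\<Prod>i<m. A (s i) ((q \<circ> s) i)) = of_int (sign s) * (of_int (sign q) * (\<Prod>i<m. A i (q i)))"
      by (simp add: sign_compose[OF qp sp])
  qed
  also have "\<dots> = of_int (sign s) * ldet m A"
    unfolding ldet_def by (simp add: sum_distrib_left)
  finally show ?thesis .
qed

lemma ldet_permute_cols:
  assumes s: "s permutes {..<m}"
  shows "ldet m (\<lambda>a b. A a (s b)) = of_int (sign s) * ldet m A"
proof -
  have "ldet m (\<lambda>a b. A a (s b)) = ldet m (tr (\<lambda>a b. tr A (s a) b))"
    by (simp add: tr_def)
  also have "\<dots> = of_int (sign s) * ldet m (tr A)"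
    by (simp only: ldet_transpose ldet_permute_rows[OF s])
  finally show ?thesis by (simp add: ldet_transpose)
qed

lemma ldet_identical_rows:
  assumes "i < m" "k < m" "i \<noteq> k" "\<And>b. A i b = A k b"
  shows "ldet m A = 0"
proof -
  have t: "Transposition.transpose i k permutes {..<m}"
    using assms by (simp add: permutes_swap_id)
  have "(\<lambda>a b. A (Transposition.transpose i k a) b) = A"
    using assms(4) by (auto simp: Transposition.transpose_def fun_eq_iff)
  with ldet_permute_rows[OF t, of A] have "ldet m A = - ldet m A"
    using assms(3) by (simp add: sign_swap_id)
  then show ?thesis by simp
qed

lemma ldet_identical_cols:
  assumes "i < m" "k < m" "i \<noteq> k" "\<And>a. A a i = A a k"
  shows "ldet m A = 0"
proof -
  have "ldet m (tr A) = 0"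
    by (rule ldet_identical_rows[OF assms(1-3)]) (simp add: tr_def assms(4))
  then show ?thesis by (simp add: ldet_transpose)
qed

lemma prod_upd_one:
  assumes "finite A" "i \<in> A"
  shows "(\<Prod>a\<in>A. if a = i then x else g a) = x * (\<Prod>a\<in>A-{i}. g a)"
  using assms by (simp add: prod.remove)

lemma ldet_row_lin:
  assumes "i < m" "finite S"
  shows "ldet m (\<lambda>a b. if a = i then (\<Sum>s\<in>S. \<alpha> s * R s b) else A a b)
       = (\<Sum>s\<in>S. \<alpha> s * ldet m (\<lambda>a b. if a = i then R s b else A a b))"
proof -
  have "ldet m (\<lambda>a b. if a = i then (\<Sum>s\<in>S. \<alpha> s * R s b) else A a b)
     = (\<Sum>p | p permutes {..<m}. \<Sum>s\<in>S. \<alpha> s * (of_int (sign p) * (\<Prod>a<m. if a = i then R s (p a) else A a (p a))))"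
    unfolding ldet_def
    apply (rule sum.cong[OF refl])
    using assms
    apply (simp add: prod_upd_one[where i=i] sum_distrib_left sum_distrib_right mult_ac if_distrib cong: if_cong)
    done
  also have "\<dots> = (\<Sum>s\<in>S. \<alpha> s * ldet m (\<lambda>a b. if a = i then R s b else A a b))"
    unfolding ldet_def by (subst sum.swap) (simp add: sum_distrib_left)
  finally show ?thesis .
qed

definition Edet :: "nat \<Rightarrow> (nat \<Rightarrow> nat \<Rightarrow> real) \<Rightarrow> (nat \<Rightarrow> nat \<Rightarrow> real) \<Rightarrow> real" where
  "Edet m M N = (\<Sum>p | p permutes {..<m}. of_int (sign p) *
      (\<Sum>i<m. N i (p i) * (\<Prod>j\<in>{..<m}-{i}. M j (p j))))"

lemma Edet_rows: "Edet m M N = (\<Sum>i<m. ldet m (\<lambda>a b. if a = i then N a b else M a b))"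
proof -
  have "Edet m M N = (\<Sum>i<m. \<Sum>p | p permutes {..<m}. of_int (sign p) *
      (N i (p i) * (\<Prod>j\<in>{..<m}-{i}. M j (p j))))"
    unfolding Edet_def by (subst sum.swap) (simp add: sum_distrib_left)
  also have "\<dots> = (\<Sum>i<m. ldet m (\<lambda>a b. if a = i then N a b else M a b))"
    unfolding ldet_def
  proof (rule sum.cong[OF refl], rule sum.cong[OF refl])
    fix i p assume i: "i \<in> {..<m}"
    have "(\<Prod>a<m. if a = i then N a (p a) else M a (p a)) = N i (p i) * (\<Prod>a\<in>{..<m}-{i}. M a (p a))"
      using i by (simp add: prod.remove)
    then show "of_int (sign p) * (N i (p i) * (\<Prod>j\<in>{..<m}-{i}. M j (p j))) =
      of_int (sign p) * (\<Prod>a<m. (\<lambda>a b. if a = i then N a b else M a b) a (p a))" by simp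
  qed
  finally show ?thesis .
qed

lemma ldet_has_derivative:
  fixes f :: "nat \<Rightarrow> nat \<Rightarrow> 'a::real_normed_vector \<Rightarrow> real"
  assumes "\<And>a b. a < m \<Longrightarrow> b < m \<Longrightarrow> (f a b has_derivative f' a b) (at x)"
  shows "((\<lambda>y. ldet m (\<lambda>a b. f a b y)) has_derivative (\<lambda>v. Edet m (\<lambda>a b. f a b x) (\<lambda>a b. f' a b v))) (at x)"
proof -
  have "((\<lambda>y. \<Sum>p | p permutes {..<m}. of_int (sign p) * (\<Prod>i<m. f i (p i) y)) has_derivative
     (\<lambda>v. \<Sum>p | p permutes {..<m}. of_int (sign p) * (\<Sum>i<m. f' i (p i) v * (\<Prod>j\<in>{..<m}-{i}. f j (p j) x)))) (at x)"
  proof (rule has_derivative_sum, rule has_derivative_mult_right, rule has_derivative_prod)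
    fix p i assume "p \<in> {p. p permutes {..<m}}" "i \<in> {..<m}"
    then have "p i < m" by (auto dest: permutes_in_image)
    then show "(f i (p i) has_derivative f' i (p i)) (at x)" using assms \<open>i \<in> {..<m}\<close> by simp
  qed
  then show ?thesis unfolding ldet_def Edet_def .
qed

lemma ldet_line_deriv:
  "((\<lambda>t::real. ldet m (\<lambda>a b. M a b + t * N a b)) has_derivative (\<lambda>h. h * Edet m M N)) (at 0)"
proof -
  have "((\<lambda>t::real. ldet m (\<lambda>a b. M a b + t * N a b)) has_derivative
     (\<lambda>h. Edet m (\<lambda>a b. M a b + 0 * N a b) (\<lambda>a b. h * N a b))) (at 0)"
    by (rule ldet_has_derivative) (auto intro!: derivative_eq_intros)
  moreover have "(\<lambda>h. Edet m (\<lambda>a b. M a b + 0 * N a b) (\<lambda>a b. h * N a b)) = (\<lambda>h. h * Edet m M N)"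
    by (auto simp: Edet_def fun_eq_iff sum_distrib_left mult_ac)
  ultimately show ?thesis by simp
qed

lemma Edet_tr: "Edet m M N = Edet m (tr M) (tr N)"
proof -
  have eq: "(\<lambda>t::real. ldet m (\<lambda>a b. M a b + t * N a b)) = (\<lambda>t. ldet m (\<lambda>a b. tr M a b + t * tr N a b))"
  proof
    fix t :: real
    have "ldet m (\<lambda>a b. tr M a b + t * tr N a b) = ldet m (tr (\<lambda>a b. M a b + t * N a b))"
      by (simp add: tr_def)
    then show "ldet m (\<lambda>a b. M a b + t * N a b) = ldet m (\<lambda>a b. tr M a b + t * tr N a b)"
      by (simp add: ldet_transpose)
  qed
  have "(\<lambda>h::real. h * Edet m M N) = (\<lambda>h. h * Edet m (tr M) (tr N))"
    using has_derivative_unique[OF ldet_line_deriv[of m M N], unfolded eq, OF ldet_line_deriv] .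
  then show ?thesis by (metis mult_1)
qed

lemma Edet_cols: "Edet m M N = (\<Sum>k<m. ldet m (\<lambda>a b. if b = k then N a b else M a b))"
proof -
  have "Edet m M N = (\<Sum>k<m. ldet m (\<lambda>a b. if a = k then tr N a b else tr M a b))"
    by (subst Edet_tr) (simp only: Edet_rows)
  also have "\<dots> = (\<Sum>k<m. ldet m (tr (\<lambda>a b. if b = k then N a b else M a b)))"
    apply (rule sum.cong[OF refl]) apply (rule arg_cong[where f="ldet m"]) apply (rule ext)+ apply simp done
  finally show ?thesis by (simp add: ldet_transpose)
qed

lemma ldet_cong:
  assumes "\<And>a b. a < m \<Longrightarrow> b < m \<Longrightarrow> A a b = B a b"
  shows "ldet m A = ldet m B"
  unfolding ldet_def
proof (rule sum.cong[OF refl])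
  fix p assume "p \<in> {p. p permutes {..<m}}"
  then have "\<And>i. i < m \<Longrightarrow> p i < m" by (auto dest: permutes_in_image)
  then show "of_int (sign p) * (\<Prod>i<m. A i (p i)) = of_int (sign p) * (\<Prod>i<m. B i (p i))"
    using assms by (auto intro!: prod.cong)
qed

lemma sorted_perm_exists:
  fixes \<rho> :: "nat \<Rightarrow> 'a::linorder"
  assumes inj: "inj_on \<rho> {..<m}"
  shows "\<exists>\<sigma>. \<sigma> permutes {..<m} \<and> (\<forall>a<m. sorted_list_of_set (\<rho> ` {..<m}) ! a = \<rho> (\<sigma> a))"
proof -
  let ?I = "\<rho> ` {..<m}"
  let ?s = "sorted_list_of_set ?I"
  have cI: "card ?I = m" using inj by (simp add: card_image)
  have b1: "bij_betw ((!) ?s) {..<m} ?I"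
    by (rule bij_betw_nth) (auto simp: cI)
  have b2: "bij_betw (inv_into {..<m} \<rho>) ?I {..<m}"
    using inj by (simp add: bij_betw_inv_into inj_on_imp_bij_betw)
  define \<sigma> where "\<sigma> a = (if a < m then inv_into {..<m} \<rho> (?s ! a) else a)" for a
  have "bij_betw (inv_into {..<m} \<rho> \<circ> (!) ?s) {..<m} {..<m}"
    by (rule bij_betw_trans[OF b1 b2])
  then have "bij_betw \<sigma> {..<m} {..<m}"
    by (rule bij_betw_cong[THEN iffD1, rotated]) (simp add: \<sigma>_def)
  then have "\<sigma> permutes {..<m}"
    by (rule bij_imp_permutes) (simp add: \<sigma>_def)
  moreover have "\<forall>a<m. ?s ! a = \<rho> (\<sigma> a)"
  proof (intro allI impI)
    fix a assume a: "a < m"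
    have "?s ! a \<in> ?I" using b1 a by (auto dest: bij_betw_apply)
    then show "?s ! a = \<rho> (\<sigma> a)" using a by (simp add: \<sigma>_def f_inv_into_f)
  qed
  ultimately show ?thesis by blast
qed

lemma minor_le_norm:
  fixes M :: "'n::{finite,linorder} \<Rightarrow> nat \<Rightarrow> real"
  assumes "card I = m" "J \<subseteq> {..<N}" "card J = m"
  shows "\<bar>minor M I J\<bar> \<le> minors_norm m N M"
proof -
  have fJ: "finite {J. J \<subseteq> {..<N} \<and> card J = m}" by (rule finite_subset[of _ "Pow {..<N}"]) auto
  have "(minor M I J)\<^sup>2 \<le> (\<Sum>J\<in>{J. J \<subseteq> {..<N} \<and> card J = m}. (minor M I J)\<^sup>2)"
    by (rule member_le_sum) (use assms fJ in auto)
  also have "\<dots> \<le> (\<Sum>I\<in>{I::'n set. card I = m}. \<Sum>J\<in>{J. J \<subseteq> {..<N} \<and> card J = m}. (minor M I J)\<^sup>2)"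
    by (rule member_le_sum[where f="\<lambda>I. \<Sum>J\<in>{J. J \<subseteq> {..<N} \<and> card J = m}. (minor M I J)\<^sup>2"])
       (use assms in \<open>auto intro: sum_nonneg\<close>)
  finally have "sqrt ((minor M I J)\<^sup>2) \<le> minors_norm m N M" unfolding minors_norm_def
    by (rule real_sqrt_le_mono)
  then show ?thesis by simp
qed

lemma ldet_le_minors_norm:
  fixes M :: "'n::{finite,linorder} \<Rightarrow> nat \<Rightarrow> real"
  assumes k: "\<And>b. b < m \<Longrightarrow> \<kappa> b < N"
  shows "\<bar>ldet m (\<lambda>a b. M (\<rho> a) (\<kappa> b))\<bar> \<le> minors_norm m N M"
proof -
  have nn: "0 \<le> minors_norm m N M" unfolding minors_norm_def
    by (auto intro!: sum_nonneg)
  show ?thesis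
  proof (cases "inj_on \<rho> {..<m} \<and> inj_on \<kappa> {..<m}")
    case False
    then consider "\<not> inj_on \<rho> {..<m}" | "\<not> inj_on \<kappa> {..<m}" by blast
    then have "ldet m (\<lambda>a b. M (\<rho> a) (\<kappa> b)) = 0"
    proof cases
      case 1
      then obtain a1 a2 where "a1 < m" "a2 < m" "a1 \<noteq> a2" "\<rho> a1 = \<rho> a2"
        unfolding inj_on_def by auto
      then show ?thesis by (intro ldet_identical_rows[of a1 m a2]) auto
    next
      case 2
      then obtain a1 a2 where "a1 < m" "a2 < m" "a1 \<noteq> a2" "\<kappa> a1 = \<kappa> a2"
        unfolding inj_on_def by auto
      then show ?thesis by (intro ldet_identical_cols[of a1 m a2]) auto
    qed
    then show ?thesis using nn by simp
  next
    case True
    obtain \<sigma> where s: "\<sigma> permutes {..<m}" "\<forall>a<m. sorted_list_of_set (\<rho> ` {..<m}) ! a = \<rho> (\<sigma> a)"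
      using sorted_perm_exists True by blast
    obtain \<tau> where t: "\<tau> permutes {..<m}" "\<forall>a<m. sorted_list_of_set (\<kappa> ` {..<m}) ! a = \<kappa> (\<tau> a)"
      using sorted_perm_exists True by blast
    have cI: "card (\<rho> ` {..<m}) = m" using True by (simp add: card_image)
    have cJ: "card (\<kappa> ` {..<m}) = m" using True by (simp add: card_image)
    have "minor M (\<rho> ` {..<m}) (\<kappa> ` {..<m}) = ldet m (\<lambda>a b. M (\<rho> (\<sigma> a)) (\<kappa> (\<tau> b)))"
      unfolding minor_def cI by (rule ldet_cong) (use s t in auto)
    also have "\<dots> = of_int (sign \<sigma>) * ldet m (\<lambda>a b. M (\<rho> a) (\<kappa> (\<tau> b)))"
      by (rule ldet_permute_rows[OF s(1), of "\<lambda>a b. M (\<rho> a) (\<kappa> (\<tau> b))"])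
    also have "\<dots> = of_int (sign \<sigma>) * (of_int (sign \<tau>) * ldet m (\<lambda>a b. M (\<rho> a) (\<kappa> b)))"
      by (subst ldet_permute_cols[OF t(1), of "\<lambda>a b. M (\<rho> a) (\<kappa> b)"]) simp
    finally have "\<bar>minor M (\<rho> ` {..<m}) (\<kappa> ` {..<m})\<bar> = \<bar>ldet m (\<lambda>a b. M (\<rho> a) (\<kappa> b))\<bar>"
      by (simp add: abs_mult flip: of_int_abs)
    moreover have "\<bar>minor M (\<rho> ` {..<m}) (\<kappa> ` {..<m})\<bar> \<le> minors_norm m N M"
      by (rule minor_le_norm) (use cI cJ k in auto)
    ultimately show ?thesis by simp
  qed
qed

lemma Edet_cong:
  assumes "\<And>a b. a < m \<Longrightarrow> b < m \<Longrightarrow> N a b = N' a b"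
  shows "Edet m M N = Edet m M N'"
  unfolding Edet_rows using assms by (intro sum.cong refl ldet_cong) auto

lemma Edet_add: "Edet m M (\<lambda>a b. N1 a b + N2 a b) = Edet m M N1 + Edet m M N2"
  unfolding Edet_def by (simp add: distrib_right distrib_left sum.distrib)

lemma ldet_col_lin:
  assumes "k < m" "finite S"
  shows "ldet m (\<lambda>a b. if b = k then (\<Sum>s\<in>S. \<alpha> s * R s a) else A a b)
       = (\<Sum>s\<in>S. \<alpha> s * ldet m (\<lambda>a b. if b = k then R s a else A a b))"
proof -
  have "ldet m (\<lambda>a b. if b = k then (\<Sum>s\<in>S. \<alpha> s * R s a) else A a b)
      = ldet m (\<lambda>a b. if a = k then (\<Sum>s\<in>S. \<alpha> s * R s b) else tr A a b)"
  proof -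
    have "(\<lambda>a b. if a = k then (\<Sum>s\<in>S. \<alpha> s * R s b) else tr A a b)
       = tr (\<lambda>a b. if b = k then (\<Sum>s\<in>S. \<alpha> s * R s a) else A a b)" by (simp add: fun_eq_iff)
    then show ?thesis by (simp only: ldet_transpose)
  qed
  also have "\<dots> = (\<Sum>s\<in>S. \<alpha> s * ldet m (\<lambda>a b. if a = k then R s b else tr A a b))"
    by (rule ldet_row_lin[OF assms])
  also have "\<dots> = (\<Sum>s\<in>S. \<alpha> s * ldet m (\<lambda>a b. if b = k then R s a else A a b))"
  proof (rule sum.cong[OF refl])
    fix s
    have "ldet m (\<lambda>a b. if a = k then R s b else tr A a b) = ldet m (tr (\<lambda>a b. if b = k then R s a else A a b))"
      by (rule arg_cong[where f="ldet m"]) (simp add: fun_eq_iff)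
    then show "\<alpha> s * ldet m (\<lambda>a b. if a = k then R s b else tr A a b) = \<alpha> s * ldet m (\<lambda>a b. if b = k then R s a else A a b)"
      by (simp only: ldet_transpose)
  qed
  finally show ?thesis .
qed

lemma sum_abs_bound:
  assumes "finite A" "\<And>a. a \<in> A \<Longrightarrow> \<bar>f a\<bar> \<le> (B::real)"
  shows "\<bar>sum f A\<bar> \<le> real (card A) * B"
proof -
  have "\<bar>sum f A\<bar> \<le> (\<Sum>a\<in>A. \<bar>f a\<bar>)" by (rule sum_abs)
  also have "\<dots> \<le> (\<Sum>a\<in>A. B)" by (rule sum_mono) (rule assms(2))
  finally show ?thesis by simp
qed

theorem lemma3p6:
  fixes \<delta>0 D \<xi>0 K :: real
  assumes "0 < \<delta>0" and "0 < \<xi>0"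
  shows "\<exists>C. \<forall>(\<Omega> :: (real^'n::{finite,linorder}) set) X DX d n0 \<xi> x0 c c1 c2 n1 j I J x.
    open \<Omega> \<and> connected \<Omega> \<and>
    (\<forall>i<n0. \<forall>y\<in>\<Omega>. (X i has_derivative blinfun_apply (DX i y)) (at y)) \<and>
    (\<forall>i<n0. continuous_on \<Omega> (DX i)) \<and>
    (\<forall>i<n0. \<delta>0 \<le> d i \<and> d i \<le> D) \<and>
    \<xi>0 \<le> \<xi> \<and> \<xi> \<le> 1 \<and> x0 \<in> \<Omega> \<and>
    cond_C \<Omega> X d n0 x0 \<xi> \<and>
    (\<forall>i<n0. \<forall>k<n0. \<forall>y\<in>cc_ball \<Omega> X d n0 x0 \<xi>.
        DX k y (X i y) - DX i y (X k y) = (\<Sum>l<n0. c l i k y *\<^sub>R X l y)) \<and>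
    inj_on (\<lambda>i. X i x0) {..<n0} \<and> independent ((\<lambda>i. X i x0) ` {..<n0}) \<and>
    (\<forall>i<n0. \<forall>y\<in>cc_ball \<Omega> X d n0 x0 \<xi>. norm (X i y) \<le> K \<and> norm (DX i y) \<le> K) \<and>
    (\<forall>l<n0. \<forall>i<n0. \<forall>k<n0.
       continuous_on (cc_ball \<Omega> X d n0 x0 \<xi>) (c l i k) \<and>
       (\<forall>y\<in>cc_ball \<Omega> X d n0 x0 \<xi>. \<bar>c l i k y\<bar> \<le> K) \<and>
       (\<forall>p<n0. has_lie_deriv_on (X p) (c l i k) (c1 l i k p) (cc_ball \<Omega> X d n0 x0 \<xi>) \<and>
          continuous_on (cc_ball \<Omega> X d n0 x0 \<xi>) (c1 l i k p) \<and>
          (\<forall>y\<in>cc_ball \<Omega> X d n0 x0 \<xi>. \<bar>c1 l i k p y\<bar> \<le> K) \<and>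
          (\<forall>q<n0. has_lie_deriv_on (X q) (c1 l i k p) (c2 l i k p q) (cc_ball \<Omega> X d n0 x0 \<xi>) \<and>
             continuous_on (cc_ball \<Omega> X d n0 x0 \<xi>) (c2 l i k p q) \<and>
             (\<forall>y\<in>cc_ball \<Omega> X d n0 x0 \<xi>. \<bar>c2 l i k p q y\<bar> \<le> K)))) \<and>
    1 \<le> n1 \<and> n1 \<le> n0 \<and> j < n0 \<and>
    card I = n1 \<and> J \<subseteq> {..<n0} \<and> card J = n1 \<and>
    x \<in> cc_ball \<Omega> X d n0 x0 \<xi>
    \<longrightarrow> (\<exists>L. ((\<lambda>y. minor (Xmat X y) I J) has_derivative L) (at x) \<and>
           \<bar>L (X j x)\<bar> \<le> C * minors_norm n1 n0 (Xmat X x))"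
  apply (rule exI[of _ "2 * real CARD('n) ^ 2 * \<bar>K\<bar>"])
  apply (intro allI impI, elim conjE)
  subgoal premises H for \<Omega> X DX d n0 \<xi> x0 c c1 c2 n1 j I J x
  proof -
    let ?B = "cc_ball \<Omega> X d n0 x0 \<xi>"
    let ?n = "real CARD('n)"
    have xB: "x \<in> ?B" by (rule H(21))
    then obtain \<gamma> a where "x = \<gamma> 1" "control_path \<Omega> X d n0 x0 \<xi> a \<gamma>"
      unfolding cc_ball_def by blast
    then have xO: "x \<in> \<Omega>" unfolding control_path_def by auto
    have hd: "\<And>i. i < n0 \<Longrightarrow> (X i has_derivative blinfun_apply (DX i x)) (at x)"
      using H(3) xO by blast
    have comm: "\<And>i k. i < n0 \<Longrightarrow> k < n0 \<Longrightarrow>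
        DX k x (X i x) - DX i x (X k x) = (\<Sum>l<n0. c l i k x *\<^sub>R X l x)"
      using H(10) xB by blast
    have bX: "\<And>i. i < n0 \<Longrightarrow> norm (X i x) \<le> K \<and> norm (DX i x) \<le> K"
      using H(13) xB by blast
    have bc: "\<And>l i k. l < n0 \<Longrightarrow> i < n0 \<Longrightarrow> k < n0 \<Longrightarrow> \<bar>c l i k x\<bar> \<le> K"
      using H(14) xB by blast
    note n1 = H(15,16) and j = H(17) and cI = H(18) and Jsub = H(19) and cJ = H(20)
    note inj0 = H(11) and ind0 = H(12)
    have n0n: "n0 \<le> CARD('n)"
      using independent_bound[OF ind0] card_image[OF inj0] by simp
    have K0: "0 \<le> K" using bX[OF j] norm_ge_zero order_trans by blast
    define m where "m = n1"
    define sI where "sI = sorted_list_of_set I"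
    define sJ where "sJ = sorted_list_of_set J"
    have fJ: "finite J" using Jsub finite_subset by blast
    have lsJ: "length sJ = m" using cJ fJ by (simp add: sJ_def m_def)
    have sJn0: "\<And>b. b < m \<Longrightarrow> sJ ! b < n0"
    proof -
      fix b assume "b < m"
      then have "sJ ! b \<in> set sJ" using lsJ by simp
      then show "sJ ! b < n0" using fJ Jsub by (auto simp: sJ_def)
    qed
    define Mx where "Mx = (\<lambda>a b. Xmat X x (sI ! a) (sJ ! b))"
    define L where "L = (\<lambda>v. Edet m Mx (\<lambda>a b. DX (sJ ! b) x v $ (sI ! a)))"
    have minor_eq: "(\<lambda>y. minor (Xmat X y) I J) = (\<lambda>y. ldet m (\<lambda>a b. X (sJ ! b) y $ (sI ! a)))"
      by (simp add: minor_def Xmat_def cI m_def sI_def sJ_def)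
    have deriv: "((\<lambda>y. minor (Xmat X y) I J) has_derivative L) (at x)"
      unfolding minor_eq unfolding L_def Mx_def Xmat_def
      by (rule ldet_has_derivative)
         (rule bounded_linear.has_derivative[OF bounded_linear_vec_nth hd], simp add: sJn0)
    define Nm where "Nm = minors_norm n1 n0 (Xmat X x)"
    have bound: "\<bar>L (X j x)\<bar> \<le> 2 * ?n ^ 2 * \<bar>K\<bar> * Nm"
    proof -
      have Nm0: "0 \<le> Nm" unfolding Nm_def minors_norm_def by (auto intro!: sum_nonneg)
      have m0: "m \<le> n0" using n1 by (simp add: m_def)
      define N1 where "N1 = (\<lambda>a b. DX j x (X (sJ ! b) x) $ (sI ! a))"
      define N2 where "N2 = (\<lambda>a b. \<Sum>l<n0. c l j (sJ ! b) x * X l x $ (sI ! a))"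
      have "L (X j x) = Edet m Mx (\<lambda>a b. N1 a b + N2 a b)"
        unfolding L_def
      proof (rule Edet_cong)
        fix a b assume "a < m" "b < m"
        then have "DX (sJ ! b) x (X j x) = DX j x (X (sJ ! b) x) + (\<Sum>l<n0. c l j (sJ ! b) x *\<^sub>R X l x)"
          using comm[OF j sJn0] by (simp add: algebra_simps)
        then show "DX (sJ ! b) x (X j x) $ sI ! a = N1 a b + N2 a b"
          by (simp add: N1_def N2_def)
      qed
      also have "\<dots> = Edet m Mx N1 + Edet m Mx N2" by (rule Edet_add)
      finally have Lsplit: "L (X j x) = Edet m Mx N1 + Edet m Mx N2" .
      have E1: "\<bar>Edet m Mx N1\<bar> \<le> real m * (?n * (K * Nm))"
        unfolding Edet_rows
      proof (rule sum_abs_bound[where A="{..<m}", simplified])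
        fix i assume i: "i < m"
        define \<alpha> where "\<alpha> s = DX j x (axis s 1) $ (sI ! i)" for s
        have N1i: "N1 i b = (\<Sum>s\<in>UNIV. \<alpha> s * Xmat X x s (sJ ! b))" for b
        proof -
          have "DX j x (X (sJ ! b) x) = DX j x (\<Sum>s\<in>UNIV. (X (sJ ! b) x $ s) *\<^sub>R axis s 1)"
            using basis_expansion[of "X (sJ ! b) x"] by (simp add: scalar_mult_eq_scaleR)
          also have "\<dots> = (\<Sum>s\<in>UNIV. (X (sJ ! b) x $ s) *\<^sub>R DX j x (axis s 1))"
            by (simp add: blinfun.sum_right blinfun.scaleR_right)
          finally show ?thesis by (simp add: N1_def \<alpha>_def Xmat_def mult.commute)
        qed
        have "ldet m (\<lambda>a b. if a = i then N1 a b else Mx a b)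
            = ldet m (\<lambda>a b. if a = i then (\<Sum>s\<in>UNIV. \<alpha> s * Xmat X x s (sJ ! b)) else Mx a b)"
          by (rule arg_cong[where f="ldet m"]) (simp add: fun_eq_iff N1i)
        also have "\<dots> = (\<Sum>s\<in>UNIV. \<alpha> s * ldet m (\<lambda>a b. if a = i then Xmat X x s (sJ ! b) else Mx a b))"
          by (rule ldet_row_lin[OF i]) simp
        finally have eq: "ldet m (\<lambda>a b. if a = i then N1 a b else Mx a b)
            = (\<Sum>s\<in>UNIV. \<alpha> s * ldet m (\<lambda>a b. Xmat X x (if a = i then s else sI ! a) (sJ ! b)))"
          by (simp add: Mx_def if_distrib[where f="\<lambda>r. Xmat X x r _"] cong: if_cong)
        show "\<bar>ldet m (\<lambda>a b. if a = i then N1 a b else Mx a b)\<bar> \<le> ?n * (K * Nm)"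
          unfolding eq
        proof (rule sum_abs_bound[where A="UNIV::'n set", simplified])
          fix s :: 'n
          have "\<bar>\<alpha> s\<bar> \<le> norm (DX j x (axis s 1))" unfolding \<alpha>_def by (rule component_le_norm_cart)
          also have "\<dots> \<le> norm (DX j x) * norm (axis s (1::real))" by (rule norm_blinfun)
          also have "\<dots> \<le> K" using bX[OF j] by simp
          finally have a: "\<bar>\<alpha> s\<bar> \<le> K" .
          have b: "\<bar>ldet m (\<lambda>a b. Xmat X x (if a = i then s else sI ! a) (sJ ! b))\<bar> \<le> Nm"
            unfolding Nm_def m_def[symmetric] by (rule ldet_le_minors_norm) (simp add: sJn0)
          show "\<bar>\<alpha> s * ldet m (\<lambda>a b. Xmat X x (if a = i then s else sI ! a) (sJ ! b))\<bar> \<le> K * Nm"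
            unfolding abs_mult by (rule mult_mono[OF a b]) (use K0 in auto)
        qed
      qed
      have E2: "\<bar>Edet m Mx N2\<bar> \<le> real m * (real n0 * (K * Nm))"
        unfolding Edet_cols
      proof (rule sum_abs_bound[where A="{..<m}", simplified])
        fix k assume k: "k < m"
        have "ldet m (\<lambda>a b. if b = k then N2 a b else Mx a b)
            = ldet m (\<lambda>a b. if b = k then (\<Sum>l\<in>{..<n0}. c l j (sJ ! k) x * Xmat X x (sI ! a) l) else Mx a b)"
          by (rule arg_cong[where f="ldet m"]) (simp add: fun_eq_iff N2_def Xmat_def)
        also have "\<dots> = (\<Sum>l\<in>{..<n0}. c l j (sJ ! k) x * ldet m (\<lambda>a b. if b = k then Xmat X x (sI ! a) l else Mx a b))"
          by (rule ldet_col_lin[OF k]) simp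
        finally have eq: "ldet m (\<lambda>a b. if b = k then N2 a b else Mx a b)
            = (\<Sum>l\<in>{..<n0}. c l j (sJ ! k) x * ldet m (\<lambda>a b. Xmat X x (sI ! a) (if b = k then l else sJ ! b)))"
          by (simp add: Mx_def if_distrib[where f="\<lambda>r. Xmat X x _ r"] cong: if_cong)
        show "\<bar>ldet m (\<lambda>a b. if b = k then N2 a b else Mx a b)\<bar> \<le> real n0 * (K * Nm)"
          unfolding eq
        proof (rule sum_abs_bound[where A="{..<n0}", simplified])
          fix l assume l: "l < n0"
          have a: "\<bar>c l j (sJ ! k) x\<bar> \<le> K" using bc[OF l j sJn0[OF k]] .
          have b: "\<bar>ldet m (\<lambda>a b. Xmat X x (sI ! a) (if b = k then l else sJ ! b))\<bar> \<le> Nm"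
            unfolding Nm_def m_def[symmetric] by (rule ldet_le_minors_norm) (simp add: sJn0 l)
          show "\<bar>c l j (sJ ! k) x * ldet m (\<lambda>a b. Xmat X x (sI ! a) (if b = k then l else sJ ! b))\<bar> \<le> K * Nm"
            unfolding abs_mult by (rule mult_mono[OF a b]) (use K0 in auto)
        qed
      qed
      have KN: "0 \<le> K * Nm" using K0 Nm0 by simp
      have mn: "real m * ?n \<le> ?n ^ 2" using m0 n0n
        by (simp add: power2_eq_square mult_right_mono)
      have mn0: "real m * real n0 \<le> ?n ^ 2" using m0 n0n
        by (simp add: power2_eq_square mult_mono)
      have "\<bar>L (X j x)\<bar> \<le> real m * (?n * (K * Nm)) + real m * (real n0 * (K * Nm))"
        using Lsplit E1 E2 by linarith
      also have "\<dots> = (real m * ?n) * (K * Nm) + (real m * real n0) * (K * Nm)" by simp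
      also have "\<dots> \<le> ?n ^ 2 * (K * Nm) + ?n ^ 2 * (K * Nm)"
        by (intro add_mono mult_right_mono mn mn0 KN)
      also have "\<dots> = 2 * ?n ^ 2 * \<bar>K\<bar> * Nm" using K0 by simp
      finally show ?thesis .
    qed
    show ?thesis using deriv bound unfolding Nm_def by blast
  qed
  done

end
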